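(* Let $\lambda$ be counting measure on $\mathbb{N}$, and let $X_1(\lambda),X_2(\lambda),Y_1(\lambda),Y_2(\lambda)$ be saturated Banach sequence spaces in each of which the unit vectors $(e^n)$ form a Schauder basis; assume also that $(e^n)$ is a Schauder basis of $Y_1(\lambda)'$. Let $T\colon X_1(\lambda)\to Y_1(\lambda)$ and $S\colon X_2(\lambda)\to Y_2(\lambda)$ be nontrivial continuous linear operators with matrices $a_{ij}=T(e^j)_i$ and $b_{ij}=S(e^j)_i$. Assume that $Y_2^{Y_1''}$ is saturated and that $Y_2(\lambda)$ or $Y_1(\lambda)'$ is $\sigma$-order continuous. Given $h=(h_j)\in X_1^{X_2}$, the following are equivalent: (a) $T$ factors strongly through $S$ and $M_h$, i.e. there exists $g\in Y_2^{Y_1''}$ with $T(x)=g\,S(hx)$ for all $x\in X_1(\lambda)$. (b) There exists $g=(g_i)\in Y_2^{Y_1''}$ such that $a_{ij}/b_{ij}=g_ih_j$ whenever $b_{ij}\ne0$, and $a_{ij}=0$ whenever $b_{ij}=0$. (c) There exists $C>0$ such that $$\sum_{i=1}^n\sum_{j=1}^m r_{ij}a_{ij}\le C\Big\Vert\sum_{i=1}^n\Big(\sum_{j=1}^m h_jr_{ij}b_{ij}\Big)e^i\Big\Vert_{Y_2\pi Y_1'}$$ for all $n,m\in\mathbb{N}$ and all real $(r_{ij})$ with $|r_{ij}|\le1$. Moreover, if $Y_2(\lambda)\subset Y_1(\lambda)''$, then the condition (d) there exists $C>0$ such that $\sum_{j=1}^m r_ja_{nj}\le C\big|\sum_{j=1}^m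 h_jr_jb_{nj}\big|$ for all $n,m\in\mathbb{N}$ and all real $(r_j)$ with $|r_j|\le1$ implies (a)–(c). If moreover $Y_2^{Y_1''}=\ell^\infty$, then (d) is equivalent to (a)–(c).
   Context: A Banach sequence space is a Banach function space over counting measure on $\mathbb{N}$: a Banach space of real sequences such that $|x|\le|y|$ coordinatewise with $y$ in the space implies $x$ in the space and $\Vert x\Vert\le\Vert y\Vert$; saturated means for each $n$ some element has nonzero $n$-th coordinate; $\sigma$-order continuous means $x_k\downarrow0$ coordinatewise implies $\Vert x_k\Vert\downarrow0$. $X^Y=\{h: hx\in Y\ \forall x\in X\}$ with norm $\sup_{x\in B_X}\Vert hx\Vert_Y$; $X'=X^{\ell^1}$ (Köthe dual), $X''=(X')'$. The $\pi$-product $X\pi Y$ is the space of $h$ with $|h|\le\sum_n|f_ng_n|$ for some $f_n\in X$, $g_n\in Y$, $\sum_n\Vert f_n\Vert_X\Vert g_n\Vert_Y<\infty$, with norm the infimum of $\sum_n\Vert f_n\Vert_X\Vert g_n\Vert_Y$. *)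

theory Defs
  imports "HOL-Analysis.Analysis"
begin

text \<open>Sequences are functions nat => real (index 0 plays the role of index 1).
A sequence space is given by a carrier set X and a norm function N (only meaningful on X).\<close>

definition unitv :: "nat \<Rightarrow> nat \<Rightarrow> real" where
  "unitv n = (\<lambda>i. if i = n then 1 else 0)"

definition banach_seq_space :: "(nat \<Rightarrow> real) set \<Rightarrow> ((nat \<Rightarrow> real) \<Rightarrow> real) \<Rightarrow> bool" where
  "banach_seq_space X N \<longleftrightarrow>
     (\<lambda>i. 0) \<in> X \<and>
     (\<forall>x\<in>X. \<forall>y\<in>X. (\<lambda>i. x i + y i) \<in> X) \<and>
     (\<forall>c. \<forall>x\<in>X. (\<lambda>i. c * x i) \<in> X) \<and>
     (\<forall>x\<in>X. 0 \<le> N x \<and> (N x = 0 \<longleftrightarrow> x = (\<lambda>i. 0))) \<and>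
     (\<forall>c. \<forall>x\<in>X. N (\<lambda>i. c * x i) = \<bar>c\<bar> * N x) \<and>
     (\<forall>x\<in>X. \<forall>y\<in>X. N (\<lambda>i. x i + y i) \<le> N x + N y) \<and>
     (\<forall>x y. y \<in> X \<and> (\<forall>i. \<bar>x i\<bar> \<le> \<bar>y i\<bar>) \<longrightarrow> x \<in> X \<and> N x \<le> N y) \<and>
     (\<forall>s. (\<forall>k. s k \<in> X) \<and>
          (\<forall>\<epsilon>>0. \<exists>K. \<forall>k\<ge>K. \<forall>l\<ge>K. N (\<lambda>i. s k i - s l i) < \<epsilon>)
          \<longrightarrow> (\<exists>x\<in>X. (\<lambda>k. N (\<lambda>i. s k i - x i)) \<longlonglongrightarrow> 0))"

definition saturated :: "(nat \<Rightarrow> real) set \<Rightarrow> bool" where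
  "saturated X \<longleftrightarrow> (\<forall>n. \<exists>x\<in>X. x n \<noteq> 0)"

definition sigma_order_continuous :: "(nat \<Rightarrow> real) set \<Rightarrow> ((nat \<Rightarrow> real) \<Rightarrow> real) \<Rightarrow> bool" where
  "sigma_order_continuous X N \<longleftrightarrow>
     (\<forall>s. (\<forall>k. s k \<in> X) \<and> (\<forall>k i. 0 \<le> s (Suc k) i \<and> s (Suc k) i \<le> s k i) \<and>
          (\<forall>i. (\<lambda>k. s k i) \<longlonglongrightarrow> 0)
          \<longrightarrow> (\<lambda>k. N (s k)) \<longlonglongrightarrow> 0)"

text \<open>The unit vectors form a Schauder basis: they lie in X and every x in X is the
norm limit of its truncations (the coefficients are necessarily the coordinates).\<close>
definition unit_vectors_schauder_basis :: "(nat \<Rightarrow> real) set \<Rightarrow> ((nat \<Rightarrow> real) \<Rightarrow> real) \<Rightarrow> bool" where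
  "unit_vectors_schauder_basis X N \<longleftrightarrow>
     (\<forall>k. unitv k \<in> X) \<and>
     (\<forall>x\<in>X. (\<lambda>n. N (\<lambda>i. if i < n then 0 else x i)) \<longlonglongrightarrow> 0)"

definition mult_space :: "(nat \<Rightarrow> real) set \<Rightarrow> (nat \<Rightarrow> real) set \<Rightarrow> (nat \<Rightarrow> real) set" where
  "mult_space X Y = {h. \<forall>x\<in>X. (\<lambda>i. h i * x i) \<in> Y}"

definition mult_norm :: "(nat \<Rightarrow> real) set \<Rightarrow> ((nat \<Rightarrow> real) \<Rightarrow> real) \<Rightarrow> ((nat \<Rightarrow> real) \<Rightarrow> real)
    \<Rightarrow> (nat \<Rightarrow> real) \<Rightarrow> real" where
  "mult_norm X N M h = (SUP x\<in>{x\<in>X. N x \<le> 1}. M (\<lambda>i. h i * x i))"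

definition l1 :: "(nat \<Rightarrow> real) set" where
  "l1 = {x. summable (\<lambda>i. \<bar>x i\<bar>)}"

definition l1_norm :: "(nat \<Rightarrow> real) \<Rightarrow> real" where
  "l1_norm x = (\<Sum>i. \<bar>x i\<bar>)"

definition linf :: "(nat \<Rightarrow> real) set" where
  "linf = {x. \<exists>K. \<forall>i. \<bar>x i\<bar> \<le> K}"

definition kothe_dual :: "(nat \<Rightarrow> real) set \<Rightarrow> (nat \<Rightarrow> real) set" where
  "kothe_dual X = mult_space X l1"

definition kothe_norm :: "(nat \<Rightarrow> real) set \<Rightarrow> ((nat \<Rightarrow> real) \<Rightarrow> real) \<Rightarrow> (nat \<Rightarrow> real) \<Rightarrow> real" where
  "kothe_norm X N = mult_norm X N l1_norm"

definition pi_norm :: "(nat \<Rightarrow> real) set \<Rightarrow> ((nat \<Rightarrow> real) \<Rightarrow> real) \<Rightarrow>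
    (nat \<Rightarrow> real) set \<Rightarrow> ((nat \<Rightarrow> real) \<Rightarrow> real) \<Rightarrow> (nat \<Rightarrow> real) \<Rightarrow> real" where
  "pi_norm X N Y M h = Inf {(\<Sum>n. N (f n) * M (g n)) | f g.
      (\<forall>n. f n \<in> X \<and> g n \<in> Y) \<and> summable (\<lambda>n. N (f n) * M (g n)) \<and>
      (\<forall>i. summable (\<lambda>n. \<bar>f n i * g n i\<bar>) \<and> \<bar>h i\<bar> \<le> (\<Sum>n. \<bar>f n i * g n i\<bar>))}"

text \<open>Continuous linear operators between sequence spaces (only the values on X matter).\<close>
definition bounded_linear_op :: "(nat \<Rightarrow> real) set \<Rightarrow> ((nat \<Rightarrow> real) \<Rightarrow> real) \<Rightarrow>
    (nat \<Rightarrow> real) set \<Rightarrow> ((nat \<Rightarrow> real) \<Rightarrow> real) \<Rightarrow> ((nat \<Rightarrow> real) \<Rightarrow> (nat \<Rightarrow> real)) \<Rightarrow> bool" where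
  "bounded_linear_op X N Y M T \<longleftrightarrow>
     (\<forall>x\<in>X. T x \<in> Y) \<and>
     (\<forall>x\<in>X. \<forall>y\<in>X. T (\<lambda>i. x i + y i) = (\<lambda>i. T x i + T y i)) \<and>
     (\<forall>c. \<forall>x\<in>X. T (\<lambda>i. c * x i) = (\<lambda>i. c * T x i)) \<and>
     (\<exists>K. \<forall>x\<in>X. M (T x) \<le> K * N x)"

definition nontrivial_op :: "(nat \<Rightarrow> real) set \<Rightarrow> ((nat \<Rightarrow> real) \<Rightarrow> (nat \<Rightarrow> real)) \<Rightarrow> bool" where
  "nontrivial_op X T \<longleftrightarrow> (\<exists>x\<in>X. T x \<noteq> (\<lambda>i. 0))"

end

theory Submission
  imports Defs
begin


locale bss =
  fixes X :: "(nat \<Rightarrow> real) set" and N :: "(nat \<Rightarrow> real) \<Rightarrow> real"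
  assumes sp: "banach_seq_space X N"
begin

lemma zero: "(\<lambda>i. 0) \<in> X" using sp unfolding banach_seq_space_def by blast
lemma add: "x \<in> X \<Longrightarrow> y \<in> X \<Longrightarrow> (\<lambda>i. x i + y i) \<in> X" using sp unfolding banach_seq_space_def by blast
lemma scale: "x \<in> X \<Longrightarrow> (\<lambda>i. c * x i) \<in> X" using sp unfolding banach_seq_space_def by blast
lemma nonneg: "x \<in> X \<Longrightarrow> 0 \<le> N x" using sp unfolding banach_seq_space_def by blast
lemma N0: "x \<in> X \<Longrightarrow> N x = 0 \<longleftrightarrow> x = (\<lambda>i. 0)" using sp unfolding banach_seq_space_def by blast
lemma Nscale: "x \<in> X \<Longrightarrow> N (\<lambda>i. c * x i) = \<bar>c\<bar> * N x" using sp unfolding banach_seq_space_def by blast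
lemma tri: "x \<in> X \<Longrightarrow> y \<in> X \<Longrightarrow> N (\<lambda>i. x i + y i) \<le> N x + N y" using sp unfolding banach_seq_space_def by blast
lemma solid: "y \<in> X \<Longrightarrow> (\<And>i. \<bar>x i\<bar> \<le> \<bar>y i\<bar>) \<Longrightarrow> x \<in> X \<and> N x \<le> N y" using sp unfolding banach_seq_space_def by blast
lemma complete: "(\<And>k. s k \<in> X) \<Longrightarrow> (\<And>\<epsilon>. \<epsilon>>0 \<Longrightarrow> \<exists>K. \<forall>k\<ge>K. \<forall>l\<ge>K. N (\<lambda>i. s k i - s l i) < \<epsilon>)
          \<Longrightarrow> (\<exists>x\<in>X. (\<lambda>k. N (\<lambda>i. s k i - x i)) \<longlonglongrightarrow> 0)" using sp unfolding banach_seq_space_def by blast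

lemma minus: "x \<in> X \<Longrightarrow> y \<in> X \<Longrightarrow> (\<lambda>i. x i - y i) \<in> X"
proof -
  assume "x \<in> X" "y \<in> X"
  hence "(\<lambda>i. x i + (-1) * y i) \<in> X" using add scale by blast
  thus ?thesis by simp
qed

lemma Nminus_sym: "x \<in> X \<Longrightarrow> y \<in> X \<Longrightarrow> N (\<lambda>i. x i - y i) = N (\<lambda>i. y i - x i)"
  using Nscale[of "\<lambda>i. x i - y i" "-1"] minus by simp

lemma coord: "x \<in> X \<Longrightarrow> unitv k \<in> X \<Longrightarrow> \<bar>x k\<bar> * N (unitv k) \<le> N x"
proof -
  assume x: "x \<in> X" and u: "unitv k \<in> X"
  have "(\<lambda>i. x k * unitv k i) \<in> X \<and> N (\<lambda>i. x k * unitv k i) \<le> N x"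
    by (rule solid[OF x]) (simp add: unitv_def)
  with Nscale[OF u] show ?thesis by simp
qed

lemma unit_pos: "unitv k \<in> X \<Longrightarrow> 0 < N (unitv k)"
proof -
  assume u: "unitv k \<in> X"
  have "unitv k \<noteq> (\<lambda>i. 0)" by (metis unitv_def zero_neq_one)
  with N0[OF u] nonneg[OF u] show ?thesis by linarith
qed

lemma coord_conv: assumes "\<And>n. s n \<in> X" "x \<in> X" "unitv k \<in> X"
  "(\<lambda>n. N (\<lambda>i. s n i - x i)) \<longlonglongrightarrow> 0"
  shows "(\<lambda>n. s n k) \<longlonglongrightarrow> x k"
proof -
  have p: "0 < N (unitv k)" using unit_pos assms by blast
  have b: "\<bar>s n k - x k\<bar> \<le> N (\<lambda>i. s n i - x i) / N (unitv k)" for n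
    using coord[OF minus[OF assms(1) assms(2)] assms(3)] p by (simp add: field_simps)
  have "(\<lambda>n. N (\<lambda>i. s n i - x i) / N (unitv k)) \<longlonglongrightarrow> 0"
    using tendsto_divide_zero[OF assms(4)] by simp
  hence "(\<lambda>n. s n k - x k) \<longlonglongrightarrow> 0"
    by (rule Lim_null_comparison[rotated]) (use b in \<open>auto intro: always_eventually\<close>)
  thus ?thesis by (simp add: LIM_zero_iff)
qed

lemma sum_in: "finite F \<Longrightarrow> (\<And>j. j \<in> F \<Longrightarrow> f j \<in> X) \<Longrightarrow> (\<lambda>i. \<Sum>j\<in>F. f j i) \<in> X \<and> N (\<lambda>i. \<Sum>j\<in>F. f j i) \<le> (\<Sum>j\<in>F. N (f j))"
proof (induction F rule: finite_induct)
  case empty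
  then show ?case using zero N0[OF zero] by simp
next
  case (insert a F)
  have e: "(\<lambda>i. \<Sum>j\<in>insert a F. f j i) = (\<lambda>i. f a i + (\<Sum>j\<in>F. f j i))" using insert by simp
  have "f a \<in> X" using insert by simp
  moreover have "(\<lambda>i. \<Sum>j\<in>F. f j i) \<in> X" "N (\<lambda>i. \<Sum>j\<in>F. f j i) \<le> (\<Sum>j\<in>F. N (f j))" using insert by auto
  ultimately show ?case unfolding e using add tri insert by fastforce
qed

lemma abs_in: "x \<in> X \<Longrightarrow> (\<lambda>i. \<bar>x i\<bar>) \<in> X \<and> N (\<lambda>i. \<bar>x i\<bar>) \<le> N x"
  by (rule solid) auto

lemma sigma:
  assumes a: "\<And>k. a k \<in> X" "\<And>k. N (a k) \<le> 1" and u: "\<And>k. unitv k \<in> X"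
  shows "(\<forall>i. summable (\<lambda>k. (1/2)^k * \<bar>a k i\<bar>)) \<and> (\<lambda>i. \<Sum>k. (1/2)^k * \<bar>a k i\<bar>) \<in> X"
proof -
  define f where "f k = (\<lambda>i. (1/2::real)^k * \<bar>a k i\<bar>)" for k
  define s where "s n = (\<lambda>i. \<Sum>k<n. f k i)" for n
  have fX: "f k \<in> X" for k unfolding f_def using scale abs_in a by blast
  have fN: "N (f k) \<le> (1/2)^k" for k
  proof -
    have "N (f k) = (1/2)^k * N (\<lambda>i. \<bar>a k i\<bar>)" unfolding f_def using Nscale abs_in a by simp
    also have "\<dots> \<le> (1/2)^k * 1" using abs_in[OF a(1), of k] a(2)[of k]
      by (intro mult_left_mono) (linarith, simp)
    finally show ?thesis by simp
  qed
  have sX: "s n \<in> X" for n unfolding s_def using sum_in[of "{..<n}" f] fX by auto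
  have geo: "k \<le> l \<Longrightarrow> (\<Sum>j\<in>{k..<l}. (1/2::real)^j) = 2*((1/2)^k - (1/2)^l)" for k l
  proof (induction l rule: dec_induct)
    case (step n)
    have "(\<Sum>j\<in>{k..<Suc n}. (1/2::real)^j) = (\<Sum>j\<in>{k..<n}. (1/2::real)^j) + (1/2)^n"
      using step(1) by simp
    also have "\<dots> = 2*((1/2)^k - (1/2)^n) + (1/2)^n" using step by simp
    also have "\<dots> = 2*((1/2)^k - (1/2)^Suc n)" by simp
    finally show ?case .
  qed simp
  have diffb: "N (\<lambda>i. s l i - s k i) \<le> 2*(1/2)^k" if "k \<le> l" for k l
  proof -
    have e: "(\<lambda>i. s l i - s k i) = (\<lambda>i. \<Sum>j\<in>{k..<l}. f j i)"
      unfolding s_def using that by (auto simp: atLeast0LessThan[symmetric] sum_diff_nat_ivl)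
    have "N (\<lambda>i. \<Sum>j\<in>{k..<l}. f j i) \<le> (\<Sum>j\<in>{k..<l}. N (f j))"
      using sum_in[of "{k..<l}" f] fX by auto
    also have "\<dots> \<le> (\<Sum>j\<in>{k..<l}. (1/2)^j)" by (rule sum_mono) (rule fN)
    also have "\<dots> \<le> 2*(1/2)^k" using geo[OF that] by simp
    finally show ?thesis unfolding e .
  qed
  have cauchy: "\<exists>K. \<forall>k\<ge>K. \<forall>l\<ge>K. N (\<lambda>i. s k i - s l i) < \<epsilon>" if eps: "\<epsilon> > 0" for \<epsilon>
  proof -
    obtain K where K: "(1/2::real)^K < \<epsilon>/2" using real_arch_pow_inv[of "\<epsilon>/2" "1/2"] eps by auto
    have "N (\<lambda>i. s k i - s l i) < \<epsilon>" if "k \<ge> K" "l \<ge> K" for k l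
    proof (cases "k \<le> l")
      case True
      have "N (\<lambda>i. s k i - s l i) = N (\<lambda>i. s l i - s k i)" using Nminus_sym sX by blast
      also have "\<dots> \<le> 2*(1/2)^k" using diffb True by blast
      also have "\<dots> \<le> 2*(1/2)^K" using that by (simp add: power_decreasing)
      finally show ?thesis using K by simp
    next
      case False
      have "N (\<lambda>i. s k i - s l i) \<le> 2*(1/2)^l" using diffb False by simp
      also have "\<dots> \<le> 2*(1/2)^K" using that by (simp add: power_decreasing)
      finally show ?thesis using K by simp
    qed
    thus ?thesis by blast
  qed
  obtain x where x: "x \<in> X" "(\<lambda>k. N (\<lambda>i. s k i - x i)) \<longlonglongrightarrow> 0"
    using complete[OF sX cauchy] by blast
  have "(\<lambda>n. s n i) \<longlonglongrightarrow> x i" for i using coord_conv[OF sX x(1) u x(2)] .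
  hence sm: "(\<lambda>k. f k i) sums x i" for i unfolding sums_def s_def by simp
  have xe: "(\<lambda>i. \<Sum>k. f k i) = x"
  proof
    fix i show "(\<Sum>k. f k i) = x i" using sums_unique[OF sm[of i]] by simp
  qed
  have "\<forall>i. summable (\<lambda>k. f k i)" using sm sums_summable by blast
  thus ?thesis using xe x(1) unfolding f_def by simp
qed

end


definition sig :: "(nat \<Rightarrow> real) set \<Rightarrow> (nat \<Rightarrow> real) set \<Rightarrow> bool" where
  "sig B X \<longleftrightarrow> (\<forall>a. (\<forall>k. a k \<in> B) \<longrightarrow>
     (\<forall>i. summable (\<lambda>k. (1/2)^k * \<bar>a k i\<bar>)) \<and> (\<lambda>i. \<Sum>k. (1/2)^k * \<bar>a k i\<bar>) \<in> X)"

lemma term_le_suminf: "summable f \<Longrightarrow> (\<And>n. 0 \<le> f n) \<Longrightarrow> f k \<le> suminf (f::nat\<Rightarrow>real)"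
  using sum_le_suminf[of f "{k}"] by auto

lemma bilin:
  fixes w :: "nat \<Rightarrow> real"
  assumes s1: "sig B1 X1" and s2: "sig B2 X2" and B1: "B1 \<subseteq> X1" and B2: "B2 \<subseteq> X2"
    and sm: "\<And>x y. x \<in> X1 \<Longrightarrow> y \<in> X2 \<Longrightarrow> summable (\<lambda>i. \<bar>w i * x i * y i\<bar>)"
  shows "\<exists>K. \<forall>x\<in>B1. \<forall>y\<in>B2. (\<Sum>i. \<bar>w i * x i * y i\<bar>) \<le> K"
proof (rule ccontr)
  assume "\<not> ?thesis"
  hence "\<forall>k::nat. \<exists>x\<in>B1. \<exists>y\<in>B2. (\<Sum>i. \<bar>w i * x i * y i\<bar>) > 4^k * real k" by (meson not_le)
  then obtain xs ys where xs: "\<And>k. xs k \<in> B1" and ys: "\<And>k. ys k \<in> B2"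
    and big: "\<And>k. (\<Sum>i. \<bar>w i * xs k i * ys k i\<bar>) > 4^k * real k"
    by metis
  define x where "x = (\<lambda>i. \<Sum>k. (1/2::real)^k * \<bar>xs k i\<bar>)"
  define y where "y = (\<lambda>i. \<Sum>k. (1/2::real)^k * \<bar>ys k i\<bar>)"
  have xX: "x \<in> X1" and xsm: "\<And>i. summable (\<lambda>k. (1/2::real)^k * \<bar>xs k i\<bar>)"
    using s1 xs unfolding sig_def x_def by blast+
  have yX: "y \<in> X2" and ysm: "\<And>i. summable (\<lambda>k. (1/2::real)^k * \<bar>ys k i\<bar>)"
    using s2 ys unfolding sig_def y_def by blast+
  have xge: "(1/2)^k * \<bar>xs k i\<bar> \<le> x i" for k i
    unfolding x_def by (rule term_le_suminf[OF xsm]) simp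
  have yge: "(1/2)^k * \<bar>ys k i\<bar> \<le> y i" for k i
    unfolding y_def by (rule term_le_suminf[OF ysm]) simp
  have S: "summable (\<lambda>i. \<bar>w i * x i * y i\<bar>)" using sm xX yX by blast
  have "real k < (\<Sum>i. \<bar>w i * x i * y i\<bar>)" for k
  proof -
    have pt: "(1/4)^k * \<bar>w i * xs k i * ys k i\<bar> \<le> \<bar>w i * x i * y i\<bar>" for i
    proof -
      have "(1/4::real)^k * \<bar>w i * xs k i * ys k i\<bar> = \<bar>w i\<bar> * (((1/2)^k * \<bar>xs k i\<bar>) * ((1/2)^k * \<bar>ys k i\<bar>))"
        by (simp add: abs_mult power_mult_distrib[symmetric])
      also have "\<dots> \<le> \<bar>w i\<bar> * (x i * y i)"
        by (intro mult_left_mono mult_mono xge yge) (auto intro: order_trans[OF _ xge])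
      also have "\<dots> = \<bar>w i * x i * y i\<bar>"
        using order_trans[OF _ xge, of 0 0 i] order_trans[OF _ yge, of 0 0 i] by (simp add: abs_mult)
      finally show ?thesis .
    qed
    have smk: "summable (\<lambda>i. \<bar>w i * xs k i * ys k i\<bar>)" using sm xs ys B1 B2 by blast
    have "real k = (1/4)^k * (4^k * real k)" by (simp add: power_mult_distrib[symmetric])
    also have "\<dots> < (1/4)^k * (\<Sum>i. \<bar>w i * xs k i * ys k i\<bar>)" using big by simp
    also have "\<dots> = (\<Sum>i. (1/4)^k * \<bar>w i * xs k i * ys k i\<bar>)" using suminf_mult[OF smk] by simp
    also have "\<dots> \<le> (\<Sum>i. \<bar>w i * x i * y i\<bar>)"
      by (rule suminf_le[OF pt summable_mult[OF smk] S])
    finally show ?thesis .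
  qed
  moreover obtain k where "(\<Sum>i. \<bar>w i * x i * y i\<bar>) < real k" using reals_Archimedean2 by blast
  ultimately show False using less_asym by blast
qed



lemma l1_unit: "l1_norm (\<lambda>j. u j * unitv i j) = \<bar>u i\<bar>"
proof -
  have "(\<lambda>j. \<bar>u j * unitv i j\<bar>) = (\<lambda>j. if j = i then \<bar>u i\<bar> else 0)" by (auto simp: unitv_def)
  thus ?thesis unfolding l1_norm_def using sums_unique[OF sums_single[of i "\<lambda>_. \<bar>u i\<bar>"]] by simp
qed

lemma sig_const: "sig {\<lambda>i. 1} (range (\<lambda>c i. c))"
  unfolding sig_def
proof (intro allI impI)
  fix a :: "nat \<Rightarrow> nat \<Rightarrow> real" assume "\<forall>k. a k \<in> {\<lambda>i. 1}"
  hence a: "a k i = 1" for k i by auto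
  show "(\<forall>i. summable (\<lambda>k. (1/2)^k * \<bar>a k i\<bar>)) \<and> (\<lambda>i. \<Sum>k. (1/2)^k * \<bar>a k i\<bar>) \<in> range (\<lambda>c i. c)"
    using a summable_geometric[of "1/2::real"] by simp
qed

locale kd = bss Y N for Y N + assumes uv: "\<And>k. unitv k \<in> Y"
begin

definition "KB = {u\<in>kothe_dual Y. \<forall>z\<in>Y. l1_norm (\<lambda>i. u i * z i) \<le> N z}"

lemma ball_sig: "sig {z\<in>Y. N z \<le> 1} Y"
  unfolding sig_def using sigma uv by blast

lemma kd_sm: "u \<in> kothe_dual Y \<Longrightarrow> z \<in> Y \<Longrightarrow> summable (\<lambda>i. \<bar>u i * z i\<bar>)"
  unfolding kothe_dual_def mult_space_def l1_def by blast

lemma KB_sig: "sig KB (kothe_dual Y)"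
  unfolding sig_def
proof (intro allI impI)
  fix a :: "nat \<Rightarrow> nat \<Rightarrow> real" assume a: "\<forall>k. a k \<in> KB"
  have ak: "\<bar>a k i\<bar> \<le> N (unitv i)" for k i
  proof -
    have "a k \<in> KB" using a by blast
    hence "l1_norm (\<lambda>j. a k j * unitv i j) \<le> N (unitv i)" using uv unfolding KB_def by blast
    thus ?thesis using l1_unit[of "a k" i] by simp
  qed
  have sm: "\<forall>i. summable (\<lambda>k. (1/2)^k * \<bar>a k i\<bar>)"
  proof
    fix i
    show "summable (\<lambda>k. (1/2::real)^k * \<bar>a k i\<bar>)"
      by (rule summable_comparison_test[where g="\<lambda>k. (1/2)^k * N (unitv i)"])
         (use ak summable_mult2[OF summable_geometric[of "1/2::real"]] in \<open>auto intro!: exI[of _ 0] mult_left_mono\<close>)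
  qed
  have "(\<lambda>i. \<Sum>k. (1/2)^k * \<bar>a k i\<bar>) \<in> kothe_dual Y"
    unfolding kothe_dual_def mult_space_def l1_def
  proof (intro CollectI ballI)
    fix z assume z: "z \<in> Y"
    let ?u = "\<lambda>i. \<Sum>k. (1/2::real)^k * \<bar>a k i\<bar>"
    have unn: "0 \<le> ?u i" for i using sm by (intro suminf_nonneg) auto
    have smz: "summable (\<lambda>i. \<bar>a k i * z i\<bar>)" for k using a z kd_sm unfolding KB_def by blast
    have lz: "(\<Sum>i<n. \<bar>a k i * z i\<bar>) \<le> N z" for k n
    proof -
      have "(\<Sum>i<n. \<bar>a k i * z i\<bar>) \<le> (\<Sum>i. \<bar>a k i * z i\<bar>)" by (rule sum_le_suminf[OF smz]) auto
      also have "\<dots> \<le> N z" using a z unfolding KB_def l1_norm_def by blast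
      finally show ?thesis .
    qed
    have smi: "summable (\<lambda>k. (1/2::real)^k * \<bar>a k i * z i\<bar>)" for i
    proof -
      have "summable (\<lambda>k. (1/2::real)^k * \<bar>a k i\<bar> * \<bar>z i\<bar>)" using summable_mult2[OF sm[rule_format, of i]] .
      thus ?thesis by (simp add: abs_mult mult.assoc)
    qed
    have "(\<Sum>i<n. \<bar>?u i * z i\<bar>) \<le> 2 * N z" for n
    proof -
      have "(\<Sum>i<n. \<bar>?u i * z i\<bar>) = (\<Sum>i<n. \<Sum>k. (1/2)^k * \<bar>a k i * z i\<bar>)"
      proof (rule sum.cong[OF refl])
        fix i
        have "\<bar>?u i * z i\<bar> = ?u i * \<bar>z i\<bar>" using unn by (simp add: abs_mult)
        also have "\<dots> = (\<Sum>k. (1/2)^k * \<bar>a k i\<bar> * \<bar>z i\<bar>)" using suminf_mult2[OF sm[rule_format, of i]] by simp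
        finally show "\<bar>?u i * z i\<bar> = (\<Sum>k. (1/2)^k * \<bar>a k i * z i\<bar>)" by (simp add: abs_mult mult.assoc)
      qed
      also have "\<dots> = (\<Sum>k. \<Sum>i<n. (1/2)^k * \<bar>a k i * z i\<bar>)"
        by (rule suminf_sum[symmetric]) (rule smi)
      also have "\<dots> \<le> (\<Sum>k. (1/2)^k * N z)"
      proof (rule suminf_le)
        show "summable (\<lambda>k. \<Sum>i<n. (1/2::real)^k * \<bar>a k i * z i\<bar>)"
          by (rule summable_sum) (rule smi)
        show "summable (\<lambda>k. (1/2::real)^k * N z)" by (simp add: summable_mult2 summable_geometric)
        fix k
        show "(\<Sum>i<n. (1/2::real)^k * \<bar>a k i * z i\<bar>) \<le> (1/2)^k * N z"
          using lz[of k n] by (simp add: sum_distrib_left[symmetric] mult_left_mono)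
      qed
      also have "\<dots> = 2 * N z" using suminf_mult2[OF summable_geometric[of "1/2::real"], of "N z"]
          suminf_geometric[of "1/2::real"] by simp
      finally show ?thesis .
    qed
    thus "summable (\<lambda>i. \<bar>?u i * z i\<bar>)" by (intro summableI_nonneg_bounded) auto
  qed
  with sm show "(\<forall>i. summable (\<lambda>k. (1/2)^k * \<bar>a k i\<bar>)) \<and> (\<lambda>i. \<Sum>k. (1/2)^k * \<bar>a k i\<bar>) \<in> kothe_dual Y" by blast
qed

lemma kn_bdd: assumes u: "u \<in> kothe_dual Y"
  shows "bdd_above ((\<lambda>z. l1_norm (\<lambda>i. u i * z i)) ` {z\<in>Y. N z \<le> 1})"
proof -
  have "\<exists>K. \<forall>x\<in>{z\<in>Y. N z \<le> 1}. \<forall>y\<in>{\<lambda>i. 1}. (\<Sum>i. \<bar>u i * x i * y i\<bar>) \<le> K"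
  proof (rule bilin[OF ball_sig sig_const])
    fix x y :: "nat \<Rightarrow> real" assume "x \<in> Y" "y \<in> range (\<lambda>c i. c :: real)"
    then obtain c where c: "y = (\<lambda>i. c)" by auto
    have "summable (\<lambda>i. \<bar>c\<bar> * \<bar>u i * x i\<bar>)" using kd_sm[OF u \<open>x \<in> Y\<close>] summable_mult by blast
    thus "summable (\<lambda>i. \<bar>u i * x i * y i\<bar>)" using c by (simp add: abs_mult mult_ac)
  qed auto
  then obtain K where "\<forall>x\<in>{z\<in>Y. N z \<le> 1}. (\<Sum>i. \<bar>u i * x i\<bar>) \<le> K" by auto
  thus ?thesis unfolding l1_norm_def by (intro bdd_aboveI2) auto
qed

lemma kn_upper: "u \<in> kothe_dual Y \<Longrightarrow> z \<in> Y \<Longrightarrow> N z \<le> 1 \<Longrightarrow> l1_norm (\<lambda>i. u i * z i) \<le> kothe_norm Y N u"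
  unfolding kothe_norm_def mult_norm_def by (rule cSUP_upper[OF _ kn_bdd]) auto

lemma kn_nonneg: "u \<in> kothe_dual Y \<Longrightarrow> 0 \<le> kothe_norm Y N u"
  using kn_upper[of u "\<lambda>i. 0"] zero N0[OF zero] by (simp add: l1_norm_def)

lemma kn_bound: assumes u: "u \<in> kothe_dual Y" and z: "z \<in> Y"
  shows "l1_norm (\<lambda>i. u i * z i) \<le> kothe_norm Y N u * N z"
proof (cases "N z = 0")
  case True
  hence "z = (\<lambda>i. 0)" using N0 z by blast
  thus ?thesis using True by (simp add: l1_norm_def)
next
  case False
  hence p: "N z > 0" using nonneg[OF z] by simp
  let ?z = "\<lambda>i. (1 / N z) * z i"
  have zz: "?z \<in> Y" by (rule scale[OF z])
  have "N ?z = \<bar>1 / N z\<bar> * N z" by (rule Nscale[OF z])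
  hence "N ?z \<le> 1" using p by simp
  hence "l1_norm (\<lambda>i. u i * ?z i) \<le> kothe_norm Y N u" using kn_upper u zz by blast
  moreover have "l1_norm (\<lambda>i. u i * ?z i) = l1_norm (\<lambda>i. u i * z i) / N z"
  proof -
    have "(\<lambda>i. \<bar>u i * ?z i\<bar>) = (\<lambda>i. \<bar>u i * z i\<bar> / N z)" using p by (auto simp: abs_mult)
    thus ?thesis unfolding l1_norm_def using suminf_divide[OF kd_sm[OF u z]] by simp
  qed
  ultimately have "l1_norm (\<lambda>i. u i * z i) / N z \<le> kothe_norm Y N u" by linarith
  thus ?thesis using p by (simp add: divide_le_eq)
qed

lemma KB_scale: assumes u: "u \<in> kothe_dual Y" and p: "kothe_norm Y N u > 0"
  shows "(\<lambda>i. u i / kothe_norm Y N u) \<in> KB"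
proof -
  let ?M = "kothe_norm Y N u"
  have "(\<lambda>i. (1/?M) * u i) \<in> kothe_dual Y"
    using u unfolding kothe_dual_def mult_space_def l1_def
    by (auto simp: abs_mult mult.assoc intro: summable_mult)
  moreover have "l1_norm (\<lambda>i. u i / ?M * z i) \<le> N z" if z: "z \<in> Y" for z
  proof -
    have "(\<lambda>i. \<bar>u i / ?M * z i\<bar>) = (\<lambda>i. \<bar>u i * z i\<bar> / ?M)" using p by (auto simp: abs_mult)
    hence "l1_norm (\<lambda>i. u i / ?M * z i) = l1_norm (\<lambda>i. u i * z i) / ?M"
      unfolding l1_norm_def using suminf_divide[OF kd_sm[OF u z]] by simp
    also have "\<dots> \<le> N z" using kn_bound[OF u z] p by (simp add: field_simps)
    finally show ?thesis .
  qed
  ultimately show ?thesis unfolding KB_def by simp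
qed

lemma kd_unit_zero: assumes u: "u \<in> kothe_dual Y" and "kothe_norm Y N u = 0" shows "u = (\<lambda>i. 0)"
proof
  fix i show "u i = 0" using kn_bound[OF u uv[of i]] assms(2) l1_unit[of u i] by simp
qed

end


lemma sum_delta1: fixes m p :: nat shows "(\<Sum>j<m. (if j = p then x else 0) * (f j::real)) = (if p < m then x * f p else 0)"
  by (induction m) (auto simp: less_Suc_eq)

lemma sum_delta2: fixes m p q :: nat shows "(\<Sum>j<m. ((if j = p then x else 0) + (if j = q then y else 0)) * (f j::real))
   = (if p < m then x * f p else 0) + (if q < m then y * f q else 0)"
  by (simp add: distrib_right sum.distrib sum_delta1)

lemma row:
  fixes a c :: "nat \<Rightarrow> real"
  assumes D: "0 \<le> D" and H: "\<And>m r. (\<forall>j. \<bar>r j\<bar> \<le> 1) \<Longrightarrow> (\<Sum>j<m. r j * a j) \<le> D * \<bar>\<Sum>j<m. r j * c j\<bar>"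
  shows "\<exists>\<gamma>. \<bar>\<gamma>\<bar> \<le> D \<and> (\<forall>j. a j = \<gamma> * c j) \<and> ((\<forall>j. c j = 0) \<longrightarrow> \<gamma> = 0)"
proof (cases "\<forall>j. c j = 0")
  case True
  have "a j = 0" for j
  proof -
    define \<sigma> where "\<sigma> = (if a j \<ge> 0 then 1 else -1::real)"
    have "(\<Sum>i<Suc j. (if i = j then \<sigma> else 0) * a i) \<le> D * \<bar>\<Sum>i<Suc j. (if i = j then \<sigma> else 0) * c i\<bar>"
      by (rule H) (auto simp: \<sigma>_def)
    hence "\<sigma> * a j \<le> 0" using True by (simp add: sum_delta1)
    thus ?thesis unfolding \<sigma>_def by (auto split: if_splits)
  qed
  thus ?thesis using True D by auto
next
  case False
  then obtain j0 where j0: "c j0 \<noteq> 0" by blast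
  define \<gamma> where "\<gamma> = a j0 / c j0"
  have aj: "a j = \<gamma> * c j" for j
  proof (cases "j = j0")
    case True thus ?thesis using j0 by (simp add: \<gamma>_def)
  next
    case False
    define s where "s = 1 / (\<bar>c j\<bar> + \<bar>c j0\<bar>)"
    have sp: "s > 0" using j0 by (simp add: s_def)
    define m where "m = Suc (max j j0)"
    have lt: "j < m" "j0 < m" unfolding m_def by auto
    have b1: "\<bar>s * c j0\<bar> \<le> 1" "\<bar>s * c j\<bar> \<le> 1" using j0 by (auto simp: s_def abs_mult field_simps)
    have key: "t * s * (c j0 * a j - c j * a j0) \<le> 0" if t: "t = 1 \<or> t = -1" for t
    proof -
      let ?r = "\<lambda>i. (if i = j then t * s * c j0 else 0) + (if i = j0 then - (t * s * c j) else 0)"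
      have "(\<Sum>i<m. ?r i * a i) \<le> D * \<bar>\<Sum>i<m. ?r i * c i\<bar>"
      proof (rule H, rule allI)
        fix i show "\<bar>?r i\<bar> \<le> 1" using b1 t False by (auto simp: abs_mult)
      qed
      moreover have "(\<Sum>i<m. ?r i * a i) = t * s * c j0 * a j + (- (t * s * c j)) * a j0"
        using lt by (simp only: sum_delta2) simp
      moreover have "(\<Sum>i<m. ?r i * c i) = t * s * c j0 * c j + (- (t * s * c j)) * c j0"
        using lt by (simp only: sum_delta2) simp
      ultimately have "(\<Sum>i<m. ?r i * a i) \<le> 0" by (simp add: algebra_simps)
      moreover have "t * s * (c j0 * a j - c j * a j0) = (\<Sum>i<m. ?r i * a i)"
        using \<open>(\<Sum>i<m. ?r i * a i) = t * s * c j0 * a j + (- (t * s * c j)) * a j0\<close> by (simp add: algebra_simps)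
      ultimately show ?thesis by linarith
    qed
    have "s * (c j0 * a j - c j * a j0) \<le> 0" using key[of 1] by simp
    moreover have "- (s * (c j0 * a j - c j * a j0)) \<le> 0" using key[of "-1"] by simp
    ultimately have "s * (c j0 * a j - c j * a j0) = 0" by linarith
    hence "c j0 * a j - c j * a j0 = 0" using sp by simp
    thus ?thesis using j0 by (simp add: \<gamma>_def field_simps)
  qed
  have "\<bar>\<gamma>\<bar> \<le> D"
  proof -
    define \<sigma> where "\<sigma> = (if \<gamma> * c j0 \<ge> 0 then 1 else -1::real)"
    have "(\<Sum>i<Suc j0. (if i = j0 then \<sigma> else 0) * a i) \<le> D * \<bar>\<Sum>i<Suc j0. (if i = j0 then \<sigma> else 0) * c i\<bar>"
      by (rule H) (auto simp: \<sigma>_def)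
    hence "\<sigma> * (\<gamma> * c j0) \<le> D * \<bar>c j0\<bar>" using aj[of j0] by (cases "0 \<le> \<gamma> * c j0") (simp_all add: sum_delta1 \<sigma>_def abs_mult)
    hence "\<bar>\<gamma>\<bar> * \<bar>c j0\<bar> \<le> D * \<bar>c j0\<bar>" unfolding \<sigma>_def by (auto simp: abs_mult split: if_splits)
    thus ?thesis using j0 by simp
  qed
  thus ?thesis using aj False by blast
qed

locale lop =
  fixes X N Y M T
  assumes op: "bounded_linear_op X N Y M T" and spX: "banach_seq_space X N" and spY: "banach_seq_space Y M"
begin

sublocale X: bss X N by (rule bss.intro[OF spX])
sublocale Y: bss Y M by (rule bss.intro[OF spY])

lemma T_in: "x \<in> X \<Longrightarrow> T x \<in> Y" using op unfolding bounded_linear_op_def by blast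
lemma T_add: "x \<in> X \<Longrightarrow> y \<in> X \<Longrightarrow> T (\<lambda>i. x i + y i) = (\<lambda>i. T x i + T y i)" using op unfolding bounded_linear_op_def by blast
lemma T_scale: "x \<in> X \<Longrightarrow> T (\<lambda>i. c * x i) = (\<lambda>i. c * T x i)" using op unfolding bounded_linear_op_def by blast
lemma T_bound: "\<exists>K. \<forall>x\<in>X. M (T x) \<le> K * N x" using op unfolding bounded_linear_op_def by blast

lemma T_zero: "T (\<lambda>i. 0) = (\<lambda>i. 0)"
  using T_scale[OF X.zero, of 0] by simp

lemma T_minus: "x \<in> X \<Longrightarrow> y \<in> X \<Longrightarrow> T (\<lambda>i. x i - y i) = (\<lambda>i. T x i - T y i)"
proof -
  assume x: "x \<in> X" and y: "y \<in> X"
  have "T (\<lambda>i. x i + (-1) * y i) = (\<lambda>i. T x i + T (\<lambda>i. (-1) * y i) i)" by (rule T_add[OF x X.scale[OF y]])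
  thus ?thesis using T_scale[OF y, of "-1"] by simp
qed

end


context lop begin
lemma T_conv:
  assumes x: "x \<in> X" and s: "\<And>n. s n \<in> X" and c: "(\<lambda>n. N (\<lambda>i. x i - s n i)) \<longlonglongrightarrow> 0"
    and u: "unitv k \<in> Y"
  shows "(\<lambda>n. T (s n) k) \<longlonglongrightarrow> T x k"
proof -
  obtain K where K: "\<And>z. z \<in> X \<Longrightarrow> M (T z) \<le> K * N z" using T_bound by blast
  have e: "M (\<lambda>i. T (s n) i - T x i) = M (T (\<lambda>i. x i - s n i))" for n
  proof -
    have "M (\<lambda>i. T (s n) i - T x i) = M (\<lambda>i. T x i - T (s n) i)"
      using Y.Nminus_sym T_in x s by blast
    also have "\<dots> = M (T (\<lambda>i. x i - s n i))" using T_minus[OF x s] by simp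
    finally show ?thesis .
  qed
  have "(\<lambda>n. M (\<lambda>i. T (s n) i - T x i)) \<longlonglongrightarrow> 0"
  proof (rule Lim_null_comparison)
    show "\<forall>\<^sub>F n in sequentially. norm (M (\<lambda>i. T (s n) i - T x i)) \<le> K * N (\<lambda>i. x i - s n i)"
      using e K X.minus[OF x s] Y.nonneg[OF Y.minus[OF T_in[OF s] T_in[OF x]]] by (intro always_eventually) auto
    show "(\<lambda>n. K * N (\<lambda>i. x i - s n i)) \<longlonglongrightarrow> 0" using tendsto_mult_right_zero[OF c] by simp
  qed
  thus ?thesis using Y.coord_conv[where s="\<lambda>n. T (s n)", OF T_in[OF s] T_in[OF x] u] by blast
qed
end

lemma (in bss) fin_in: assumes uv: "\<And>k. unitv k \<in> X" shows "(\<lambda>i. if i < n then v i else 0) \<in> X"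
proof -
  have e: "(\<lambda>i. if i < n then v i else 0) = (\<lambda>i. \<Sum>k\<in>{..<n}. v k * unitv k i)"
  proof
    fix i show "(if i < n then v i else 0) = (\<Sum>k\<in>{..<n}. v k * unitv k i)"
      by (induction n) (auto simp: unitv_def less_Suc_eq)
  qed
  show ?thesis unfolding e using sum_in[of "{..<n}" "\<lambda>k i. v k * unitv k i"] scale uv by blast
qed

locale sett =
  fixes X1 NX1 X2 NX2 Y1 NY1 Y2 NY2 T S h
  assumes spX1: "banach_seq_space X1 NX1" and bX1: "unit_vectors_schauder_basis X1 NX1"
    and spX2: "banach_seq_space X2 NX2" and bX2: "unit_vectors_schauder_basis X2 NX2"
    and spY1: "banach_seq_space Y1 NY1" and bY1: "unit_vectors_schauder_basis Y1 NY1"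
    and spY2: "banach_seq_space Y2 NY2" and bY2: "unit_vectors_schauder_basis Y2 NY2"
    and bY1d: "unit_vectors_schauder_basis (kothe_dual Y1) (kothe_norm Y1 NY1)"
    and Top: "bounded_linear_op X1 NX1 Y1 NY1 T"
    and Sop: "bounded_linear_op X2 NX2 Y2 NY2 S"
    and h: "h \<in> mult_space X1 X2"
begin

sublocale TT: lop X1 NX1 Y1 NY1 T by (rule lop.intro[OF Top spX1 spY1])
sublocale SS: lop X2 NX2 Y2 NY2 S by (rule lop.intro[OF Sop spX2 spY2])
sublocale K1: kd Y1 NY1 using bss.intro[OF spY1] bY1 unfolding unit_vectors_schauder_basis_def by (simp add: kd_axioms_def kd_def)
sublocale K2: kd Y2 NY2 using bss.intro[OF spY2] bY2 unfolding unit_vectors_schauder_basis_def by (simp add: kd_axioms_def kd_def)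

lemma uX1: "unitv k \<in> X1" using bX1 unfolding unit_vectors_schauder_basis_def by blast
lemma uX2: "unitv k \<in> X2" using bX2 unfolding unit_vectors_schauder_basis_def by blast
lemma uY1: "unitv k \<in> Y1" using bY1 unfolding unit_vectors_schauder_basis_def by blast
lemma uY2: "unitv k \<in> Y2" using bY2 unfolding unit_vectors_schauder_basis_def by blast
lemma uY1d: "unitv k \<in> kothe_dual Y1" using bY1d unfolding unit_vectors_schauder_basis_def by blast

lemma hx: "x \<in> X1 \<Longrightarrow> (\<lambda>i. h i * x i) \<in> X2" using h unfolding mult_space_def by blast

lemma AB: assumes A: "\<forall>x\<in>X1. T x = (\<lambda>i. g i * S (\<lambda>j. h j * x j) i)"
  shows "T (unitv j) i = g i * h j * S (unitv j) i"
proof -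
  have "(\<lambda>l. h l * unitv j l) = (\<lambda>l. h j * unitv j l)" by (auto simp: unitv_def)
  hence "S (\<lambda>l. h l * unitv j l) = (\<lambda>l. h j * S (unitv j) l)" using SS.T_scale[OF uX2] by simp
  thus ?thesis using A uX1[of j] by simp
qed

lemma BA: assumes B: "\<And>i j. T (unitv j) i = g i * h j * S (unitv j) i" and x: "x \<in> X1"
  shows "T x = (\<lambda>i. g i * S (\<lambda>j. h j * x j) i)"
proof -
  define P where "P n = (\<lambda>i. if i < n then x i else 0)" for n
  define hP where "hP n = (\<lambda>j. h j * P n j)" for n
  have PX: "P n \<in> X1" for n unfolding P_def by (rule conjunct1[OF TT.X.solid[OF x]]) auto
  have hPX: "hP n \<in> X2" for n unfolding hP_def P_def by (rule conjunct1[OF SS.X.solid[OF hx[OF x]]]) (auto simp: abs_mult)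
  have ind: "T (P n) = (\<lambda>i. g i * S (hP n) i)" for n
  proof (induction n)
    case 0
    have "P 0 = (\<lambda>i. 0)" "hP 0 = (\<lambda>i. 0)" unfolding P_def hP_def by auto
    thus ?case using TT.T_zero SS.T_zero by simp
  next
    case (Suc n)
    have e1: "P (Suc n) = (\<lambda>i. P n i + x n * unitv n i)" unfolding P_def by (auto simp: unitv_def less_Suc_eq)
    have e2: "hP (Suc n) = (\<lambda>i. hP n i + (h n * x n) * unitv n i)" unfolding hP_def P_def by (auto simp: unitv_def less_Suc_eq)
    have "T (P (Suc n)) = (\<lambda>i. T (P n) i + x n * T (unitv n) i)"
      unfolding e1 TT.T_add[OF PX TT.X.scale[OF uX1]] TT.T_scale[OF uX1] by simp
    moreover have "S (hP (Suc n)) = (\<lambda>i. S (hP n) i + (h n * x n) * S (unitv n) i)"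
      unfolding e2 SS.T_add[OF hPX SS.X.scale[OF uX2]] SS.T_scale[OF uX2] by simp
    ultimately show ?case using Suc B by (auto simp: algebra_simps)
  qed
  have tail1: "(\<lambda>n. NX1 (\<lambda>i. x i - P n i)) \<longlonglongrightarrow> 0"
  proof -
    have "(\<lambda>i. x i - P n i) = (\<lambda>i. if i < n then 0 else x i)" for n unfolding P_def by auto
    thus ?thesis using bX1 x unfolding unit_vectors_schauder_basis_def by simp
  qed
  have tail2: "(\<lambda>n. NX2 (\<lambda>i. h i * x i - hP n i)) \<longlonglongrightarrow> 0"
  proof -
    have "(\<lambda>i. h i * x i - hP n i) = (\<lambda>i. if i < n then 0 else h i * x i)" for n unfolding P_def hP_def by auto
    thus ?thesis using bX2 hx[OF x] unfolding unit_vectors_schauder_basis_def by simp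
  qed
  show ?thesis
  proof
    fix i
    have c1: "(\<lambda>n. T (P n) i) \<longlonglongrightarrow> T x i" by (rule TT.T_conv[OF x PX tail1 uY1])
    have c2: "(\<lambda>n. S (hP n) i) \<longlonglongrightarrow> S (\<lambda>j. h j * x j) i" by (rule SS.T_conv[OF hx[OF x] hPX tail2 uY2])
    have "(\<lambda>n. T (P n) i) \<longlonglongrightarrow> g i * S (\<lambda>j. h j * x j) i" using tendsto_mult_left[OF c2, of "g i"] ind by simp
    thus "T x i = g i * S (\<lambda>j. h j * x j) i" using c1 LIMSEQ_unique by blast
  qed
qed

end


definition PSet where
  "PSet X N Y M h = {(\<Sum>n. N (f n) * M (g n)) | f g.
      (\<forall>n. f n \<in> X \<and> g n \<in> Y) \<and> summable (\<lambda>n. N (f n) * M (g n)) \<and>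
      (\<forall>i. summable (\<lambda>n. \<bar>f n i * g n i\<bar>) \<and> \<bar>h i\<bar> \<le> (\<Sum>n. \<bar>f n i * g n i\<bar>))}"

lemma pi_PSet: "pi_norm X N Y M h = Inf (PSet X N Y M h)"
  unfolding pi_norm_def PSet_def ..

lemma sum_last: fixes i :: nat assumes "\<And>l. l < i \<Longrightarrow> F l = (0::real)" shows "(\<Sum>l<Suc i. F l) = F i"
  using assms by (simp add: sum.neutral)

context sett begin

abbreviation "KM \<equiv> kothe_norm Y1 NY1"
abbreviation "G \<equiv> mult_space Y2 (kothe_dual (kothe_dual Y1))"
abbreviation "PN \<equiv> pi_norm Y2 NY2 (kothe_dual Y1) (kothe_norm Y1 NY1)"
abbreviation "PS \<equiv> PSet Y2 NY2 (kothe_dual Y1) (kothe_norm Y1 NY1)"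

lemma gsm: "g \<in> G \<Longrightarrow> y \<in> Y2 \<Longrightarrow> u \<in> kothe_dual Y1 \<Longrightarrow> summable (\<lambda>i. \<bar>g i * y i * u i\<bar>)"
  unfolding mult_space_def kothe_dual_def l1_def by blast

lemma zero_Y1d: "(\<lambda>i. 0) \<in> kothe_dual Y1"
  unfolding mult_space_def kothe_dual_def l1_def by simp

lemma gbound: assumes g: "g \<in> G"
  shows "\<exists>K\<ge>0. \<forall>y\<in>Y2. \<forall>u\<in>kothe_dual Y1. (\<Sum>i. \<bar>g i * y i * u i\<bar>) \<le> K * NY2 y * KM u"
proof -
  obtain K0 where K0: "\<And>y u. y \<in> {y\<in>Y2. NY2 y \<le> 1} \<Longrightarrow> u \<in> K1.KB \<Longrightarrow> (\<Sum>i. \<bar>g i * y i * u i\<bar>) \<le> K0"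
    using bilin[OF K2.ball_sig K1.KB_sig, of g] gsm[OF g] unfolding K1.KB_def by blast
  define K where "K = max K0 0"
  have "(\<Sum>i. \<bar>g i * y i * u i\<bar>) \<le> K * NY2 y * KM u" if y: "y \<in> Y2" and u: "u \<in> kothe_dual Y1" for y u
  proof (cases "NY2 y = 0 \<or> KM u = 0")
    case True
    hence "y = (\<lambda>i. 0) \<or> u = (\<lambda>i. 0)" using SS.Y.N0[OF y] K1.kd_unit_zero[OF u] by blast
    thus ?thesis using True by auto
  next
    case False
    have p: "NY2 y > 0" using False SS.Y.nonneg[OF y] by simp
    have q: "KM u > 0" using False K1.kn_nonneg[OF u] by simp
    let ?y = "\<lambda>i. (1 / NY2 y) * y i"
    have yy: "?y \<in> Y2" by (rule SS.Y.scale[OF y])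
    have "NY2 ?y = \<bar>1 / NY2 y\<bar> * NY2 y" by (rule SS.Y.Nscale[OF y])
    hence "NY2 ?y \<le> 1" using p by simp
    hence "(\<Sum>i. \<bar>g i * ?y i * (u i / KM u)\<bar>) \<le> K0" using K0 yy K1.KB_scale[OF u q] by blast
    moreover have "(\<Sum>i. \<bar>g i * ?y i * (u i / KM u)\<bar>) = (\<Sum>i. \<bar>g i * y i * u i\<bar>) / (NY2 y * KM u)"
    proof -
      have "(\<lambda>i. \<bar>g i * ?y i * (u i / KM u)\<bar>) = (\<lambda>i. \<bar>g i * y i * u i\<bar> / (NY2 y * KM u))"
        using p q by (auto simp: abs_mult)
      thus ?thesis using suminf_divide[OF gsm[OF g y u]] by simp
    qed
    ultimately have "(\<Sum>i. \<bar>g i * y i * u i\<bar>) / (NY2 y * KM u) \<le> K0" by linarith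
    hence "(\<Sum>i. \<bar>g i * y i * u i\<bar>) \<le> K0 * (NY2 y * KM u)" using p q by (simp add: divide_le_eq)
    also have "\<dots> \<le> K * (NY2 y * KM u)" using p q by (intro mult_right_mono) (auto simp: K_def)
    finally show ?thesis by (simp add: mult.assoc)
  qed
  moreover have "K \<ge> 0" by (simp add: K_def)
  ultimately show ?thesis by blast
qed

lemma PS_nonneg: "s \<in> PS w \<Longrightarrow> 0 \<le> s"
  unfolding PSet_def using SS.Y.nonneg K1.kn_nonneg by (force intro!: suminf_nonneg)

lemma PS_elem: assumes f: "f \<in> Y2" and u: "u \<in> kothe_dual Y1" and w: "\<And>i. \<bar>w i\<bar> \<le> \<bar>f i * u i\<bar>"
  shows "NY2 f * KM u \<in> PS w"
proof -
  define F where "F n = (if n = 0 then f else (\<lambda>i. 0))" for n :: nat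
  define U where "U n = (if n = 0 then u else (\<lambda>i. 0))" for n :: nat
  have FU: "\<forall>n. F n \<in> Y2 \<and> U n \<in> kothe_dual Y1" unfolding F_def U_def using f u SS.Y.zero zero_Y1d by auto
  have e1: "(\<lambda>n. NY2 (F n) * KM (U n)) = (\<lambda>n. if n = 0 then NY2 f * KM u else 0)"
    unfolding F_def U_def using SS.Y.N0[OF SS.Y.zero] by auto
  have e2: "(\<lambda>n. \<bar>F n i * U n i\<bar>) = (\<lambda>n. if n = 0 then \<bar>f i * u i\<bar> else 0)" for i
    unfolding F_def U_def by auto
  have s1: "(\<lambda>n. NY2 (F n) * KM (U n)) sums (NY2 f * KM u)" unfolding e1 using sums_single[of 0 "\<lambda>_. NY2 f * KM u"] by simp
  have s2: "(\<lambda>n. \<bar>F n i * U n i\<bar>) sums \<bar>f i * u i\<bar>" for i unfolding e2 using sums_single[of 0 "\<lambda>_. \<bar>f i * u i\<bar>"] by simp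
  have "NY2 f * KM u = (\<Sum>n. NY2 (F n) * KM (U n))" using sums_unique[OF s1] .
  moreover have "\<forall>i. summable (\<lambda>n. \<bar>F n i * U n i\<bar>) \<and> \<bar>w i\<bar> \<le> (\<Sum>n. \<bar>F n i * U n i\<bar>)"
    using s2 w sums_unique sums_summable by metis
  ultimately show ?thesis unfolding PSet_def using FU s1 sums_summable by blast
qed

lemma PI_upper: assumes f: "f \<in> Y2" and u: "u \<in> kothe_dual Y1" and w: "\<And>i. \<bar>w i\<bar> \<le> \<bar>f i * u i\<bar>"
  shows "PN w \<le> NY2 f * KM u"
  unfolding pi_PSet by (rule cInf_lower[OF PS_elem[OF f u w]]) (auto intro: bdd_belowI[of _ 0] PS_nonneg)

lemma PI_lower: "PS w \<noteq> {} \<Longrightarrow> (\<And>s. s \<in> PS w \<Longrightarrow> L \<le> s) \<Longrightarrow> L \<le> PN w"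
  unfolding pi_PSet by (rule cInf_greatest)

end


context sett begin

lemma fin_Y1d: "(\<lambda>i. if i < n then 1 else 0) \<in> kothe_dual Y1"
  unfolding kothe_dual_def mult_space_def l1_def
  by (auto intro!: summable_finite[of "{..<n}"] split: if_splits)

lemma BC: assumes g: "g \<in> G" and abg: "\<And>i j. T (unitv j) i = g i * h j * S (unitv j) i"
  shows "\<exists>C>0. \<forall>n m. \<forall>r :: nat \<Rightarrow> nat \<Rightarrow> real. (\<forall>i j. \<bar>r i j\<bar> \<le> 1) \<longrightarrow>
                   (\<Sum>i<n. \<Sum>j<m. r i j * T (unitv j) i)
                     \<le> C * PN (\<lambda>i. if i < n then (\<Sum>j<m. h j * r i j * S (unitv j) i) else 0)"
proof -
  obtain K where K0: "K \<ge> 0" and K: "\<And>y u. y \<in> Y2 \<Longrightarrow> u \<in> kothe_dual Y1 \<Longrightarrow> (\<Sum>i. \<bar>g i * y i * u i\<bar>) \<le> K * NY2 y * KM u"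
    using gbound[OF g] by blast
  define C where "C = K + 1"
  have Cp: "C > 0" using K0 by (simp add: C_def)
  have "(\<Sum>i<n. \<Sum>j<m. r i j * T (unitv j) i)
                     \<le> C * PN (\<lambda>i. if i < n then (\<Sum>j<m. h j * r i j * S (unitv j) i) else 0)" for n m r
  proof -
    define W where "W i = (\<Sum>j<m. h j * r i j * S (unitv j) i)" for i
    define w where "w = (\<lambda>i. if i < n then W i else 0)"
    define L where "L = (\<Sum>i<n. \<Sum>j<m. r i j * T (unitv j) i)"
    have L: "L = (\<Sum>i<n. g i * W i)"
      unfolding L_def W_def abg by (rule sum.cong[OF refl]) (simp add: sum_distrib_left algebra_simps)
    have bnd: "L \<le> K * s" if s: "s \<in> PS w" for s
    proof -
      obtain f U where fU: "\<forall>k. f k \<in> Y2 \<and> U k \<in> kothe_dual Y1" and sm: "summable (\<lambda>k. NY2 (f k) * KM (U k))"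
        and cov: "\<And>i. summable (\<lambda>k. \<bar>f k i * U k i\<bar>) \<and> \<bar>w i\<bar> \<le> (\<Sum>k. \<bar>f k i * U k i\<bar>)"
        and se: "s = (\<Sum>k. NY2 (f k) * KM (U k))"
        using s unfolding PSet_def by blast
      have smi: "summable (\<lambda>k. \<bar>g i * f k i * U k i\<bar>)" for i
        using summable_mult[OF conjunct1[OF cov[of i]], of "\<bar>g i\<bar>"] by (simp add: abs_mult mult.assoc)
      have "L \<le> (\<Sum>i<n. \<bar>g i\<bar> * \<bar>w i\<bar>)"
        unfolding L w_def by (rule sum_mono) (auto simp: abs_mult[symmetric])
      also have "\<dots> \<le> (\<Sum>i<n. \<bar>g i\<bar> * (\<Sum>k. \<bar>f k i * U k i\<bar>))"
        by (rule sum_mono) (use cov in \<open>auto intro: mult_left_mono\<close>)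
      also have "\<dots> = (\<Sum>i<n. \<Sum>k. \<bar>g i * f k i * U k i\<bar>)"
      proof (rule sum.cong[OF refl])
        fix i
        show "\<bar>g i\<bar> * (\<Sum>k. \<bar>f k i * U k i\<bar>) = (\<Sum>k. \<bar>g i * f k i * U k i\<bar>)"
          using suminf_mult[OF conjunct1[OF cov[of i]], of "\<bar>g i\<bar>"] by (simp add: abs_mult mult.assoc)
      qed
      also have "\<dots> = (\<Sum>k. \<Sum>i<n. \<bar>g i * f k i * U k i\<bar>)" by (rule suminf_sum[symmetric]) (rule smi)
      also have "\<dots> \<le> (\<Sum>k. K * (NY2 (f k) * KM (U k)))"
      proof (rule suminf_le)
        show "summable (\<lambda>k. \<Sum>i<n. \<bar>g i * f k i * U k i\<bar>)" by (rule summable_sum) (rule smi)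
        show "summable (\<lambda>k. K * (NY2 (f k) * KM (U k)))" by (rule summable_mult[OF sm])
        fix k
        have "(\<Sum>i<n. \<bar>g i * f k i * U k i\<bar>) \<le> (\<Sum>i. \<bar>g i * f k i * U k i\<bar>)"
          by (rule sum_le_suminf[OF gsm[OF g]]) (use fU in auto)
        also have "\<dots> \<le> K * NY2 (f k) * KM (U k)" using K fU by blast
        finally show "(\<Sum>i<n. \<bar>g i * f k i * U k i\<bar>) \<le> K * (NY2 (f k) * KM (U k))" by (simp add: mult.assoc)
      qed
      also have "\<dots> = K * s" unfolding se by (rule suminf_mult[OF sm])
      finally show ?thesis .
    qed
    have ne: "PS w \<noteq> {}"
    proof -
      have "w \<in> Y2" unfolding w_def by (rule SS.Y.fin_in[OF uY2])
      moreover have "\<bar>w i\<bar> \<le> \<bar>w i * (if i < n then 1 else 0)\<bar>" for i by (simp add: w_def)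
      ultimately show ?thesis using PS_elem[OF _ fin_Y1d] by blast
    qed
    have "L / C \<le> PN w"
    proof (rule PI_lower[OF ne])
      fix s assume s: "s \<in> PS w"
      have "L \<le> K * s" by (rule bnd[OF s])
      also have "\<dots> \<le> C * s" using PS_nonneg[OF s] by (simp add: C_def mult_right_mono)
      finally show "L / C \<le> s" using Cp by (simp add: divide_le_eq mult.commute)
    qed
    hence "L \<le> C * PN w" using Cp by (simp add: divide_le_eq mult.commute)
    thus ?thesis unfolding L_def w_def W_def .
  qed
  thus ?thesis using Cp by blast
qed

end


context sett begin

lemma CB:
  assumes Cp: "C > 0"
    and HC: "\<forall>n m. \<forall>r :: nat \<Rightarrow> nat \<Rightarrow> real. (\<forall>i j. \<bar>r i j\<bar> \<le> 1) \<longrightarrow>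
                   (\<Sum>i<n. \<Sum>j<m. r i j * T (unitv j) i)
                     \<le> C * PN (\<lambda>i. if i < n then (\<Sum>j<m. h j * r i j * S (unitv j) i) else 0)"
  shows "\<exists>g\<in>G. \<forall>i j. T (unitv j) i = g i * h j * S (unitv j) i"
proof -
  have rowH: "\<exists>\<gamma>. (\<forall>j. T (unitv j) i = \<gamma> * (h j * S (unitv j) i)) \<and> ((\<forall>j. h j * S (unitv j) i = 0) \<longrightarrow> \<gamma> = 0)" for i
  proof -
    define D where "D = C * NY2 (unitv i) * KM (unitv i)"
    have D0: "D \<ge> 0" unfolding D_def using Cp SS.Y.nonneg[OF uY2] K1.kn_nonneg[OF uY1d] by simp
    have H: "(\<Sum>j<m. r j * T (unitv j) i) \<le> D * \<bar>\<Sum>j<m. r j * (h j * S (unitv j) i)\<bar>"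
      if r: "\<forall>j. \<bar>r j\<bar> \<le> 1" for m r
    proof -
      define R where "R i' j = (if i' = i then r j else 0)" for i' j
      have Rb: "\<forall>i' j. \<bar>R i' j\<bar> \<le> 1" using r by (simp add: R_def)
      have HH: "(\<Sum>i'<Suc i. \<Sum>j<m. R i' j * T (unitv j) i')
           \<le> C * PN (\<lambda>i'. if i' < Suc i then (\<Sum>j<m. h j * R i' j * S (unitv j) i') else 0)"
        using HC Rb by blast
      have e1: "(\<Sum>i'<Suc i. \<Sum>j<m. R i' j * T (unitv j) i') = (\<Sum>j<m. r j * T (unitv j) i)"
        by (subst sum_last) (auto simp: R_def)
      define v where "v = (\<Sum>j<m. h j * r j * S (unitv j) i)"
      have wb: "\<bar>(if l < Suc i then (\<Sum>j<m. h j * R l j * S (unitv j) l) else 0)\<bar> \<le> \<bar>(v * unitv i l) * unitv i l\<bar>" for l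
        by (cases "l = i") (auto simp: R_def unitv_def v_def)
      have "PN (\<lambda>i'. if i' < Suc i then (\<Sum>j<m. h j * R i' j * S (unitv j) i') else 0) \<le> NY2 (\<lambda>l. v * unitv i l) * KM (unitv i)"
        by (rule PI_upper[OF SS.Y.scale[OF uY2] uY1d wb])
      also have "\<dots> = \<bar>v\<bar> * NY2 (unitv i) * KM (unitv i)" using SS.Y.Nscale[OF uY2] by simp
      finally have "(\<Sum>j<m. r j * T (unitv j) i) \<le> C * (\<bar>v\<bar> * NY2 (unitv i) * KM (unitv i))"
        using HH e1 Cp by (smt (verit) mult_left_mono)
      moreover have "v = (\<Sum>j<m. r j * (h j * S (unitv j) i))" unfolding v_def by (simp add: algebra_simps)
      ultimately show ?thesis by (simp add: D_def algebra_simps)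
    qed
    obtain \<gamma> where "\<bar>\<gamma>\<bar> \<le> D" "\<forall>j. T (unitv j) i = \<gamma> * (h j * S (unitv j) i)" "(\<forall>j. h j * S (unitv j) i = 0) \<longrightarrow> \<gamma> = 0"
      using row[OF D0 H] by blast
    thus ?thesis by blast
  qed
  then obtain g where g: "\<And>i. (\<forall>j. T (unitv j) i = g i * (h j * S (unitv j) i)) \<and> ((\<forall>j. h j * S (unitv j) i = 0) \<longrightarrow> g i = 0)"
    by metis
  have abg: "T (unitv j) i = g i * h j * S (unitv j) i" for i j using g[of i] by (simp add: mult.assoc)
  have "summable (\<lambda>i. \<bar>g i * y i * u i\<bar>)" if y: "y \<in> Y2" and u: "u \<in> kothe_dual Y1" for y u
  proof (rule summableI_nonneg_bounded)
    fix n
    show "(\<Sum>i<n. \<bar>g i * y i * u i\<bar>) \<le> C * NY2 y * KM u"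
    proof -
      define J where "J i = (SOME j. h j * S (unitv j) i \<noteq> 0)" for i
      define cc where "cc i = h (J i) * S (unitv (J i)) i" for i
      have ccnz: "cc i \<noteq> 0" if "g i \<noteq> 0" for i
      proof -
        have "\<exists>j. h j * S (unitv j) i \<noteq> 0" using g[of i] that by blast
        thus ?thesis unfolding cc_def J_def by (rule someI_ex)
      qed
      define q where "q i = (if g i = 0 then 0 else \<bar>y i * u i\<bar> / \<bar>cc i\<bar>)" for i
      have q0: "q i \<ge> 0" for i by (simp add: q_def)
      define Q where "Q = (\<Sum>i<n. q i)"
      have qQ: "i < n \<Longrightarrow> q i \<le> Q" for i unfolding Q_def by (rule member_le_sum) (auto intro: q0)
      have Q0: "Q \<ge> 0" unfolding Q_def by (rule sum_nonneg) (rule q0)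
      define t where "t = 1 / (1 + Q)"
      have tp: "t > 0" using Q0 by (simp add: t_def)
      define \<rho> where "\<rho> i = (if g i = 0 then 0 else t * \<bar>y i * u i\<bar> * sgn (g i) / cc i)" for i
      define R where "R i j = (if i < n \<and> j = J i then \<rho> i else 0)" for i j
      define m where "m = Suc (\<Sum>i<n. J i)"
      have Jm: "J i < m" if "i < n" for i
      proof -
        have "J i \<le> (\<Sum>i<n. J i)" by (rule member_le_sum) (use that in auto)
        thus ?thesis unfolding m_def by simp
      qed
      have \<rho>abs: "\<bar>\<rho> i\<bar> = t * q i" for i
        using tp ccnz[of i] by (auto simp: \<rho>_def q_def abs_mult abs_sgn_eq)
      have Rb: "\<forall>i j. \<bar>R i j\<bar> \<le> 1"
      proof (intro allI)
        fix i j
        show "\<bar>R i j\<bar> \<le> 1"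
        proof (cases "i < n \<and> j = J i")
          case True
          have "\<bar>R i j\<bar> = q i / (1 + Q)" using True \<rho>abs by (simp add: R_def t_def)
          also have "\<dots> \<le> 1" using qQ[of i] True Q0 by simp
          finally show ?thesis .
        qed (auto simp: R_def)
      qed
      have rowd: "(\<Sum>j<m. R i j * F j) = \<rho> i * F (J i)" if i: "i < n" for i F
      proof -
        have "(\<Sum>j<m. R i j * F j) = (\<Sum>j<m. (if j = J i then \<rho> i else 0) * F j)"
          using i by (simp add: R_def)
        also have "\<dots> = \<rho> i * F (J i)" using sum_delta1[where m=m and p="J i" and x="\<rho> i" and f=F] Jm[OF i] by simp
        finally show ?thesis .
      qed
      have sg: "sgn (g i) * g i = \<bar>g i\<bar>" for i by (simp add: sgn_mult_self_eq abs_sgn mult.commute)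
      have rs: "(\<Sum>j<m. R i j * T (unitv j) i) = t * \<bar>g i * y i * u i\<bar>" if i: "i < n" for i
      proof -
        have "(\<Sum>j<m. R i j * T (unitv j) i) = \<rho> i * (g i * cc i)"
          using rowd[OF i, of "\<lambda>j. T (unitv j) i"] abg by (simp add: cc_def mult.assoc)
        also have "\<dots> = t * \<bar>g i * y i * u i\<bar>"
          using ccnz[of i] sg[of i] by (auto simp: \<rho>_def abs_mult algebra_simps)
        finally show ?thesis .
      qed
      define w where "w = (\<lambda>i. if i < n then (\<Sum>j<m. h j * R i j * S (unitv j) i) else 0)"
      have wb: "\<bar>w i\<bar> \<le> \<bar>(t * y i) * u i\<bar>" for i
      proof (cases "i < n")
        case True
        have "(\<Sum>j<m. h j * R i j * S (unitv j) i) = (\<Sum>j<m. R i j * (h j * S (unitv j) i))"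
          by (simp add: algebra_simps)
        also have "\<dots> = \<rho> i * cc i" using rowd[OF True, of "\<lambda>j. h j * S (unitv j) i"] by (simp add: cc_def)
        finally have "w i = \<rho> i * cc i" using True by (simp add: w_def)
        thus ?thesis using ccnz[of i] tp by (auto simp: \<rho>_def abs_mult abs_sgn_eq)
      qed (simp add: w_def)
      have "(\<Sum>i<n. \<Sum>j<m. R i j * T (unitv j) i) \<le> C * PN w" using HC Rb unfolding w_def by blast
      moreover have "(\<Sum>i<n. \<Sum>j<m. R i j * T (unitv j) i) = t * (\<Sum>i<n. \<bar>g i * y i * u i\<bar>)"
        by (simp add: rs sum_distrib_left)
      moreover have "PN w \<le> NY2 (\<lambda>i. t * y i) * KM u" by (rule PI_upper[OF SS.Y.scale[OF y] u wb])
      moreover have "NY2 (\<lambda>i. t * y i) = t * NY2 y" using SS.Y.Nscale[OF y] tp by simp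
      ultimately have "t * (\<Sum>i<n. \<bar>g i * y i * u i\<bar>) \<le> t * (C * NY2 y * KM u)"
        using Cp by (smt (verit) mult_left_mono mult.assoc mult.commute)
      thus ?thesis using tp by simp
    qed
  qed simp
  hence "g \<in> G" unfolding mult_space_def kothe_dual_def l1_def by (simp add: mult.assoc)
  thus ?thesis using abg by blast
qed

end


context sett begin

lemma DB:
  assumes sub: "Y2 \<subseteq> kothe_dual (kothe_dual Y1)" and Cp: "C > 0"
    and HD: "\<forall>n m. \<forall>r :: nat \<Rightarrow> real. (\<forall>j. \<bar>r j\<bar> \<le> 1) \<longrightarrow>
                   (\<Sum>j<m. r j * T (unitv j) n) \<le> C * \<bar>\<Sum>j<m. h j * r j * S (unitv j) n\<bar>"
  shows "\<exists>g\<in>G. \<forall>i j. T (unitv j) i = g i * h j * S (unitv j) i"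
proof -
  have "\<exists>\<gamma>. \<bar>\<gamma>\<bar> \<le> C \<and> (\<forall>j. T (unitv j) n = \<gamma> * (h j * S (unitv j) n))" for n
  proof -
    have H: "(\<Sum>j<m. r j * T (unitv j) n) \<le> C * \<bar>\<Sum>j<m. r j * (h j * S (unitv j) n)\<bar>"
      if "\<forall>j. \<bar>r j\<bar> \<le> 1" for m r
    proof -
      have eq: "(\<Sum>j<m. h j * r j * S (unitv j) n) = (\<Sum>j<m. r j * (h j * S (unitv j) n))"
        by (rule sum.cong[OF refl]) (simp add: algebra_simps)
      have "(\<Sum>j<m. r j * T (unitv j) n) \<le> C * \<bar>\<Sum>j<m. h j * r j * S (unitv j) n\<bar>" using HD that by blast
      thus ?thesis by (simp only: eq)
    qed
    show ?thesis using row[OF _ H] Cp by (metis less_imp_le)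
  qed
  then obtain g where g: "\<And>n. \<bar>g n\<bar> \<le> C \<and> (\<forall>j. T (unitv j) n = g n * (h j * S (unitv j) n))" by metis
  have "summable (\<lambda>i. \<bar>g i * y i * u i\<bar>)" if y: "y \<in> Y2" and u: "u \<in> kothe_dual Y1" for y u
  proof (rule summable_comparison_test)
    have "y \<in> kothe_dual (kothe_dual Y1)" using sub y by blast
    hence "summable (\<lambda>i. \<bar>y i * u i\<bar>)" using u unfolding kothe_dual_def mult_space_def l1_def by blast
    thus "summable (\<lambda>i. C * \<bar>y i * u i\<bar>)" by (rule summable_mult)
    show "\<exists>N. \<forall>n\<ge>N. norm \<bar>g n * y n * u n\<bar> \<le> C * \<bar>y n * u n\<bar>"
      using g by (auto simp: abs_mult mult.assoc intro!: mult_right_mono)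
  qed
  hence "g \<in> G" unfolding mult_space_def kothe_dual_def l1_def by (simp add: mult.assoc)
  thus ?thesis using g by (auto simp: mult.assoc)
qed

lemma AD:
  assumes GL: "G = linf" and g: "g \<in> G" and abg: "\<And>i j. T (unitv j) i = g i * h j * S (unitv j) i"
  shows "\<exists>C>0. \<forall>n m. \<forall>r :: nat \<Rightarrow> real. (\<forall>j. \<bar>r j\<bar> \<le> 1) \<longrightarrow>
                   (\<Sum>j<m. r j * T (unitv j) n) \<le> C * \<bar>\<Sum>j<m. h j * r j * S (unitv j) n\<bar>"
proof -
  obtain K where K: "\<And>i. \<bar>g i\<bar> \<le> K" using g GL unfolding linf_def by auto
  define C where "C = \<bar>K\<bar> + 1"
  have "(\<Sum>j<m. r j * T (unitv j) n) \<le> C * \<bar>\<Sum>j<m. h j * r j * S (unitv j) n\<bar>" for n m r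
  proof -
    have "(\<Sum>j<m. r j * T (unitv j) n) = g n * (\<Sum>j<m. h j * r j * S (unitv j) n)"
      unfolding abg by (simp add: sum_distrib_left algebra_simps)
    also have "\<dots> \<le> \<bar>g n\<bar> * \<bar>\<Sum>j<m. h j * r j * S (unitv j) n\<bar>" by (simp add: abs_mult[symmetric])
    also have "\<dots> \<le> C * \<bar>\<Sum>j<m. h j * r j * S (unitv j) n\<bar>"
      using K[of n] by (intro mult_right_mono) (auto simp: C_def)
    finally show ?thesis .
  qed
  moreover have "C > 0" by (simp add: C_def)
  ultimately show ?thesis by blast
qed

lemma B_iff: "(\<exists>g\<in>G. \<forall>i j. (S (unitv j) i \<noteq> 0 \<longrightarrow> T (unitv j) i / S (unitv j) i = g i * h j) \<and>
                               (S (unitv j) i = 0 \<longrightarrow> T (unitv j) i = 0))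
   \<longleftrightarrow> (\<exists>g\<in>G. \<forall>i j. T (unitv j) i = g i * h j * S (unitv j) i)"
proof -
  have "((S (unitv j) i \<noteq> 0 \<longrightarrow> T (unitv j) i / S (unitv j) i = g i * h j) \<and>
                               (S (unitv j) i = 0 \<longrightarrow> T (unitv j) i = 0))
        \<longleftrightarrow> T (unitv j) i = g i * h j * S (unitv j) i" for g i j
    by (cases "S (unitv j) i = 0") (auto simp: field_simps)
  thus ?thesis by simp
qed

end

theorem proposition5p2:
  fixes X1 X2 Y1 Y2 :: "(nat \<Rightarrow> real) set"
    and NX1 NX2 NY1 NY2 :: "(nat \<Rightarrow> real) \<Rightarrow> real"
    and T S :: "(nat \<Rightarrow> real) \<Rightarrow> (nat \<Rightarrow> real)"
    and h :: "nat \<Rightarrow> real"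
  assumes spX1: "banach_seq_space X1 NX1" and satX1: "saturated X1"
      and bX1: "unit_vectors_schauder_basis X1 NX1"
    and spX2: "banach_seq_space X2 NX2" and satX2: "saturated X2"
      and bX2: "unit_vectors_schauder_basis X2 NX2"
    and spY1: "banach_seq_space Y1 NY1" and satY1: "saturated Y1"
      and bY1: "unit_vectors_schauder_basis Y1 NY1"
    and spY2: "banach_seq_space Y2 NY2" and satY2: "saturated Y2"
      and bY2: "unit_vectors_schauder_basis Y2 NY2"
    and bY1d: "unit_vectors_schauder_basis (kothe_dual Y1) (kothe_norm Y1 NY1)"
    and T: "bounded_linear_op X1 NX1 Y1 NY1 T" and Tnt: "nontrivial_op X1 T"
    and S: "bounded_linear_op X2 NX2 Y2 NY2 S" and Snt: "nontrivial_op X2 S"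
    and satM: "saturated (mult_space Y2 (kothe_dual (kothe_dual Y1)))"
    and soc: "sigma_order_continuous Y2 NY2 \<or>
              sigma_order_continuous (kothe_dual Y1) (kothe_norm Y1 NY1)"
    and h: "h \<in> mult_space X1 X2"
  shows
   "let a = (\<lambda>i j. T (unitv j) i); b = (\<lambda>i j. S (unitv j) i);
        G = mult_space Y2 (kothe_dual (kothe_dual Y1));
        condA = (\<exists>g\<in>G. \<forall>x\<in>X1. T x = (\<lambda>i. g i * S (\<lambda>j. h j * x j) i));
        condB = (\<exists>g\<in>G. \<forall>i j. (b i j \<noteq> 0 \<longrightarrow> a i j / b i j = g i * h j) \<and>
                               (b i j = 0 \<longrightarrow> a i j = 0));
        condC = (\<exists>C>0. \<forall>n m. \<forall>r :: nat \<Rightarrow> nat \<Rightarrow> real. (\<forall>i j. \<bar>r i j\<bar> \<le> 1) \<longrightarrow>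
                   (\<Sum>i<n. \<Sum>j<m. r i j * a i j)
                     \<le> C * pi_norm Y2 NY2 (kothe_dual Y1) (kothe_norm Y1 NY1)
                           (\<lambda>i. if i < n then (\<Sum>j<m. h j * r i j * b i j) else 0));
        condD = (\<exists>C>0. \<forall>n m. \<forall>r :: nat \<Rightarrow> real. (\<forall>j. \<bar>r j\<bar> \<le> 1) \<longrightarrow>
                   (\<Sum>j<m. r j * a n j) \<le> C * \<bar>\<Sum>j<m. h j * r j * b n j\<bar>)
    in (condA \<longleftrightarrow> condB) \<and> (condB \<longleftrightarrow> condC) \<and>
       (Y2 \<subseteq> kothe_dual (kothe_dual Y1) \<longrightarrow> condD \<longrightarrow> condA) \<and>
       (Y2 \<subseteq> kothe_dual (kothe_dual Y1) \<and> G = linf \<longrightarrow> (condD \<longleftrightarrow> condA))"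
proof -
  interpret sett X1 NX1 X2 NX2 Y1 NY1 Y2 NY2 T S h
    by (rule sett.intro[OF spX1 bX1 spX2 bX2 spY1 bY1 spY2 bY2 bY1d T S h])
  let ?E = "\<exists>g\<in>G. \<forall>i j. T (unitv j) i = g i * h j * S (unitv j) i"
  have AE: "(\<exists>g\<in>G. \<forall>x\<in>X1. T x = (\<lambda>i. g i * S (\<lambda>j. h j * x j) i)) \<longleftrightarrow> ?E"
    using AB BA by blast
  have CE: "(\<exists>C>0. \<forall>n m. \<forall>r :: nat \<Rightarrow> nat \<Rightarrow> real. (\<forall>i j. \<bar>r i j\<bar> \<le> 1) \<longrightarrow>
                   (\<Sum>i<n. \<Sum>j<m. r i j * T (unitv j) i)
                     \<le> C * PN (\<lambda>i. if i < n then (\<Sum>j<m. h j * r i j * S (unitv j) i) else 0)) \<longleftrightarrow> ?E"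
  proof
    assume "\<exists>C>0. \<forall>n m. \<forall>r :: nat \<Rightarrow> nat \<Rightarrow> real. (\<forall>i j. \<bar>r i j\<bar> \<le> 1) \<longrightarrow>
                   (\<Sum>i<n. \<Sum>j<m. r i j * T (unitv j) i)
                     \<le> C * PN (\<lambda>i. if i < n then (\<Sum>j<m. h j * r i j * S (unitv j) i) else 0)"
    then obtain C where "C > 0" "\<forall>n m. \<forall>r :: nat \<Rightarrow> nat \<Rightarrow> real. (\<forall>i j. \<bar>r i j\<bar> \<le> 1) \<longrightarrow>
                   (\<Sum>i<n. \<Sum>j<m. r i j * T (unitv j) i)
                     \<le> C * PN (\<lambda>i. if i < n then (\<Sum>j<m. h j * r i j * S (unitv j) i) else 0)" by blast
    thus ?E by (rule CB)
  next
    assume ?E thus "\<exists>C>0. \<forall>n m. \<forall>r :: nat \<Rightarrow> nat \<Rightarrow> real. (\<forall>i j. \<bar>r i j\<bar> \<le> 1) \<longrightarrow>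
                   (\<Sum>i<n. \<Sum>j<m. r i j * T (unitv j) i)
                     \<le> C * PN (\<lambda>i. if i < n then (\<Sum>j<m. h j * r i j * S (unitv j) i) else 0)"
      using BC by blast
  qed
  have DE: "Y2 \<subseteq> kothe_dual (kothe_dual Y1) \<Longrightarrow> (\<exists>C>0. \<forall>n m. \<forall>r :: nat \<Rightarrow> real. (\<forall>j. \<bar>r j\<bar> \<le> 1) \<longrightarrow>
                   (\<Sum>j<m. r j * T (unitv j) n) \<le> C * \<bar>\<Sum>j<m. h j * r j * S (unitv j) n\<bar>) \<Longrightarrow> ?E"
    using DB by blast
  have ED: "G = linf \<Longrightarrow> ?E \<Longrightarrow> (\<exists>C>0. \<forall>n m. \<forall>r :: nat \<Rightarrow> real. (\<forall>j. \<bar>r j\<bar> \<le> 1) \<longrightarrow>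
                   (\<Sum>j<m. r j * T (unitv j) n) \<le> C * \<bar>\<Sum>j<m. h j * r j * S (unitv j) n\<bar>)"
    using AD by blast
  show ?thesis unfolding Let_def using AE B_iff CE DE ED by blast
qed


end
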